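(* Let $\mathcal V$ be a $*$-vector space with a (not necessarily proper) matrix ordering $\{C_n\}_n$. For each $n$ let $J_n=\operatorname{span}(C_n\cap-C_n)\subseteq M_n(\mathcal V)$ and let $J=J_1$. Then $M_n(J)=J_n$ for every $n\in\mathbb N$.
   Context: A (not necessarily proper) matrix ordering is a sequence of cones $C_n\subseteq M_n(\mathcal V)_h$ (hermitian elements) with $\alpha^*C_n\alpha\subseteq C_m$ for all $\alpha\in M_{n,m}$ and all $n,m$. *)

theory Defs
  imports Complex_Main
begin

definition star_vector_space :: "(complex \<Rightarrow> 'v::ab_group_add \<Rightarrow> 'v) \<Rightarrow> ('v \<Rightarrow> 'v) \<Rightarrow> bool" where
  "star_vector_space sc st \<longleftrightarrow> vector_space sc
     \<and> (\<forall>x. st (st x) = x)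
     \<and> (\<forall>x y. st (x + y) = st x + st y)
     \<and> (\<forall>c x. st (sc c x) = sc (cnj c) (st x))"

definition Mn :: "nat \<Rightarrow> (nat \<Rightarrow> nat \<Rightarrow> 'v::zero) set" where
  "Mn n = {A. \<forall>i j. (n \<le> i \<or> n \<le> j) \<longrightarrow> A i j = 0}"

definition Mn_of :: "nat \<Rightarrow> 'v::zero set \<Rightarrow> (nat \<Rightarrow> nat \<Rightarrow> 'v) set" where
  "Mn_of n S = {A \<in> Mn n. \<forall>i<n. \<forall>j<n. A i j \<in> S}"

definition mat_star :: "('v \<Rightarrow> 'v) \<Rightarrow> (nat \<Rightarrow> nat \<Rightarrow> 'v) \<Rightarrow> (nat \<Rightarrow> nat \<Rightarrow> 'v)" where
  "mat_star st A = (\<lambda>i j. st (A j i))"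

definition hermitian_mats :: "('v::zero \<Rightarrow> 'v) \<Rightarrow> nat \<Rightarrow> (nat \<Rightarrow> nat \<Rightarrow> 'v) set" where
  "hermitian_mats st n = {A \<in> Mn n. mat_star st A = A}"

definition mat_scale :: "(complex \<Rightarrow> 'v \<Rightarrow> 'v) \<Rightarrow> complex \<Rightarrow> (nat \<Rightarrow> nat \<Rightarrow> 'v) \<Rightarrow> (nat \<Rightarrow> nat \<Rightarrow> 'v)" where
  "mat_scale sc c A = (\<lambda>i j. sc c (A i j))"

definition mat_add :: "(nat \<Rightarrow> nat \<Rightarrow> 'v::plus) \<Rightarrow> (nat \<Rightarrow> nat \<Rightarrow> 'v) \<Rightarrow> (nat \<Rightarrow> nat \<Rightarrow> 'v)" where
  "mat_add A B = (\<lambda>i j. A i j + B i j)"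

text \<open>alpha^* X alpha for X in M_n(V) and a complex n x m matrix alpha (entries alpha i k, i<n, k<m).\<close>
definition conj_mult :: "(complex \<Rightarrow> 'v::comm_monoid_add \<Rightarrow> 'v) \<Rightarrow> nat \<Rightarrow> nat \<Rightarrow> (nat \<Rightarrow> nat \<Rightarrow> complex)
     \<Rightarrow> (nat \<Rightarrow> nat \<Rightarrow> 'v) \<Rightarrow> (nat \<Rightarrow> nat \<Rightarrow> 'v)" where
  "conj_mult sc n m \<alpha> X = (\<lambda>k l. if k < m \<and> l < m
       then (\<Sum>i<n. \<Sum>j<n. sc (cnj (\<alpha> i k) * \<alpha> j l) (X i j)) else 0)"

definition mat_cone :: "(complex \<Rightarrow> 'v::{zero,plus} \<Rightarrow> 'v) \<Rightarrow> (nat \<Rightarrow> nat \<Rightarrow> 'v) set \<Rightarrow> bool" where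
  "mat_cone sc K \<longleftrightarrow> (\<lambda>i j. 0) \<in> K
     \<and> (\<forall>A\<in>K. \<forall>B\<in>K. mat_add A B \<in> K)
     \<and> (\<forall>A\<in>K. \<forall>t::real. t \<ge> 0 \<longrightarrow> mat_scale sc (complex_of_real t) A \<in> K)"

definition matrix_ordering :: "(complex \<Rightarrow> 'v::comm_monoid_add \<Rightarrow> 'v) \<Rightarrow> ('v \<Rightarrow> 'v)
     \<Rightarrow> (nat \<Rightarrow> (nat \<Rightarrow> nat \<Rightarrow> 'v) set) \<Rightarrow> bool" where
  "matrix_ordering sc st C \<longleftrightarrow>
     (\<forall>n\<ge>1. mat_cone sc (C n) \<and> C n \<subseteq> hermitian_mats st n)
     \<and> (\<forall>n\<ge>1. \<forall>m\<ge>1. \<forall>\<alpha> X. X \<in> C n \<longrightarrow> conj_mult sc n m \<alpha> X \<in> C m)"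

definition mat_span :: "(complex \<Rightarrow> 'v::comm_monoid_add \<Rightarrow> 'v) \<Rightarrow> (nat \<Rightarrow> nat \<Rightarrow> 'v) set
     \<Rightarrow> (nat \<Rightarrow> nat \<Rightarrow> 'v) set" where
  "mat_span sc S = {X. \<exists>F c. finite F \<and> F \<subseteq> S \<and> X = (\<lambda>i j. \<Sum>A\<in>F. sc (c A) (A i j))}"

definition mat_neg :: "(nat \<Rightarrow> nat \<Rightarrow> 'v::uminus) \<Rightarrow> (nat \<Rightarrow> nat \<Rightarrow> 'v)" where
  "mat_neg A = (\<lambda>i j. - A i j)"

definition Jn :: "(complex \<Rightarrow> 'v::ab_group_add \<Rightarrow> 'v) \<Rightarrow> (nat \<Rightarrow> (nat \<Rightarrow> nat \<Rightarrow> 'v) set) \<Rightarrow> nat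
     \<Rightarrow> (nat \<Rightarrow> nat \<Rightarrow> 'v) set" where
  "Jn sc C n = mat_span sc (C n \<inter> mat_neg ` C n)"

definition J1 :: "(complex \<Rightarrow> 'v::ab_group_add \<Rightarrow> 'v) \<Rightarrow> (nat \<Rightarrow> (nat \<Rightarrow> nat \<Rightarrow> 'v) set) \<Rightarrow> 'v set" where
  "J1 sc C = (\<lambda>A. A 0 0) ` Jn sc C 1"

end

theory Submission imports Defs begin

lemma coeff_vals: fixes a b e f :: "nat \<Rightarrow> complex" 
  assumes F: "p \<noteq> q" and a_def: "a = (\<lambda>i. if i = p then 1 else if i = q then 1 else 0)"
  and b_def: "b = (\<lambda>i. if i = p then 1 else if i = q then \<i> else 0)"
  and e_def: "e = (\<lambda>i. if i = p then 1 else 0)" and f_def: "f = (\<lambda>i. if i = q then 1 else 0)"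
  shows "(k = p \<and> a k = 1 \<and> b k = 1 \<and> e k = 1 \<and> f k = 0) \<or>
         (k = q \<and> a k = 1 \<and> b k = \<i> \<and> e k = 0 \<and> f k = 1) \<or>
         (k \<noteq> p \<and> k \<noteq> q \<and> a k = 0 \<and> b k = 0 \<and> e k = 0 \<and> f k = 0)"
  using F unfolding a_def b_def e_def f_def by auto

lemma coeff_main: fixes a b e f :: "nat \<Rightarrow> complex" 
  assumes F: "p \<noteq> q"
  and vi: "(i = p \<and> a i = 1 \<and> b i = 1 \<and> e i = 1 \<and> f i = 0) \<or>
         (i = q \<and> a i = 1 \<and> b i = \<i> \<and> e i = 0 \<and> f i = 1) \<or>
         (i \<noteq> p \<and> i \<noteq> q \<and> a i = 0 \<and> b i = 0 \<and> e i = 0 \<and> f i = 0)"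
  and vj: "(j = p \<and> a j = 1 \<and> b j = 1 \<and> e j = 1 \<and> f j = 0) \<or>
         (j = q \<and> a j = 1 \<and> b j = \<i> \<and> e j = 0 \<and> f j = 1) \<or>
         (j \<noteq> p \<and> j \<noteq> q \<and> a j = 0 \<and> b j = 0 \<and> e j = 0 \<and> f j = 0)"
  shows "1/2 * (cnj (a i) * a j) + (- \<i>/2) * (cnj (b i) * b j) + (\<i> - 1)/2 * (cnj (e i) * e j)
     + (\<i> - 1)/2 * (cnj (f i) * f j) = (if i = p \<and> j = q then 1 else 0)"
  using vi vj F by (elim disjE conjE) (simp_all add: complex_eq_iff)

lemma coeff_sum: fixes a b e f :: "nat \<Rightarrow> complex" and \<alpha> :: "nat \<Rightarrow> nat \<Rightarrow> complex" and c :: "nat \<Rightarrow> complex"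
  assumes \<alpha>_def: "\<alpha> = (\<lambda>k. if k = 0 then a else if k = 1 then b else if k = 2 then e else f)"
  and c_def: "c = (\<lambda>k. if k = 0 then 1/2 else if k = 1 then - \<i>/2 else (\<i> - 1)/2)"
  shows "(\<Sum>k\<in>{0,1,2,3::nat}. c k * (cnj (\<alpha> k i) * \<alpha> k j)) =
     1/2 * (cnj (a i) * a j) + (- \<i>/2) * (cnj (b i) * b j) + (\<i> - 1)/2 * (cnj (e i) * e j)
     + (\<i> - 1)/2 * (cnj (f i) * f j)"
  unfolding \<alpha>_def c_def by (simp add: add.assoc)

lemma coeffs_eq: "\<exists>(K::nat set) c (\<alpha>::nat \<Rightarrow> nat \<Rightarrow> complex). finite K \<and>
     (\<forall>i j. (\<Sum>k\<in>K. c k * (cnj (\<alpha> k i) * \<alpha> k j)) = (if i = q \<and> j = q then 1 else 0))"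
    by (rule exI[of _ "{0::nat}"], rule exI[of _ "\<lambda>_. 1"],
        rule exI[of _ "\<lambda>_ i. if i = q then 1 else 0"]) auto

lemma coeffs_exist:
  "\<exists>(K::nat set) c (\<alpha>::nat \<Rightarrow> nat \<Rightarrow> complex). finite K \<and>
     (\<forall>i j. (\<Sum>k\<in>K. c k * (cnj (\<alpha> k i) * \<alpha> k j)) = (if i = p \<and> j = q then 1 else 0))"
proof (cases "p = q")
  case True
  show ?thesis unfolding True by (rule coeffs_eq)
next
  case False
  define a :: "nat \<Rightarrow> complex" where "a = (\<lambda>i. if i = p then 1 else if i = q then 1 else 0)"
  define b :: "nat \<Rightarrow> complex" where "b = (\<lambda>i. if i = p then 1 else if i = q then \<i> else 0)"
  define e :: "nat \<Rightarrow> complex" where "e = (\<lambda>i. if i = p then 1 else 0)"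
  define f :: "nat \<Rightarrow> complex" where "f = (\<lambda>i. if i = q then 1 else 0)"
  define \<alpha> :: "nat \<Rightarrow> nat \<Rightarrow> complex" where "\<alpha> = (\<lambda>k. if k = 0 then a else if k = 1 then b else if k = 2 then e else f)"
  define c :: "nat \<Rightarrow> complex" where "c = (\<lambda>k. if k = 0 then 1/2 else if k = 1 then - \<i>/2 else (\<i> - 1)/2)"
  have "\<forall>i j. (\<Sum>k\<in>{0,1,2,3::nat}. c k * (cnj (\<alpha> k i) * \<alpha> k j)) = (if i = p \<and> j = q then 1 else 0)"
  proof (intro allI)
    fix i j
    show "(\<Sum>k\<in>{0,1,2,3::nat}. c k * (cnj (\<alpha> k i) * \<alpha> k j)) = (if i = p \<and> j = q then 1 else 0)"
      unfolding coeff_sum[OF \<alpha>_def c_def]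
      by (rule coeff_main[OF False coeff_vals[OF False a_def b_def e_def f_def] coeff_vals[OF False a_def b_def e_def f_def]])
  qed
  then show ?thesis by (intro exI[of _ "{0,1,2,3::nat}"] exI[of _ c] exI[of _ \<alpha>] conjI) auto
qed

context
  fixes sc :: "complex \<Rightarrow> 'v::ab_group_add \<Rightarrow> 'v"
  assumes vs: "vector_space sc"
begin

interpretation V: vector_space sc by (rule vs)

lemma span_zero: "(\<lambda>i j. 0) \<in> mat_span sc S"
  unfolding mat_span_def by (rule CollectI, rule exI[of _ "{}"]) auto

lemma span_base: "A \<in> S \<Longrightarrow> A \<in> mat_span sc S"
  unfolding mat_span_def by (rule CollectI, rule exI[of _ "{A}"], rule exI[of _ "\<lambda>_. 1"]) auto

lemma span_scale: "X \<in> mat_span sc S \<Longrightarrow> mat_scale sc d X \<in> mat_span sc S"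
proof -
  assume "X \<in> mat_span sc S"
  then obtain F c where F: "finite F" "F \<subseteq> S" "X = (\<lambda>i j. \<Sum>A\<in>F. sc (c A) (A i j))"
    unfolding mat_span_def by blast
  have "mat_scale sc d X = (\<lambda>i j. \<Sum>A\<in>F. sc (d * c A) (A i j))"
    unfolding F(3) mat_scale_def by (simp add: V.scale_sum_right)
  then show ?thesis unfolding mat_span_def using F
    by (intro CollectI exI[of _ F] exI[of _ "\<lambda>A. d * c A"] conjI) simp_all
qed

lemma span_add: "X \<in> mat_span sc S \<Longrightarrow> Y \<in> mat_span sc S \<Longrightarrow> mat_add X Y \<in> mat_span sc S"
proof -
  assume "X \<in> mat_span sc S" "Y \<in> mat_span sc S"
  then obtain F c G d where F: "finite F" "F \<subseteq> S" "X = (\<lambda>i j. \<Sum>A\<in>F. sc (c A) (A i j))"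
    and G: "finite G" "G \<subseteq> S" "Y = (\<lambda>i j. \<Sum>A\<in>G. sc (d A) (A i j))"
    unfolding mat_span_def by blast
  define e where "e A = (if A \<in> F then c A else 0) + (if A \<in> G then d A else 0)" for A
  have 1: "(\<Sum>A\<in>F \<union> G. sc (if A \<in> F then c A else 0) (A i j)) = (\<Sum>A\<in>F. sc (c A) (A i j))" for i j
    by (rule sum.mono_neutral_cong_right) (use F G in auto)
  have 2: "(\<Sum>A\<in>F \<union> G. sc (if A \<in> G then d A else 0) (A i j)) = (\<Sum>A\<in>G. sc (d A) (A i j))" for i j
    by (rule sum.mono_neutral_cong_right) (use F G in auto)
  have "mat_add X Y = (\<lambda>i j. \<Sum>A\<in>F \<union> G. sc (e A) (A i j))"
    unfolding mat_add_def F(3) G(3) e_def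
    by (simp add: V.scale_left_distrib sum.distrib 1 2)
  then show ?thesis unfolding mat_span_def using F G
    by (intro CollectI exI[of _ "F \<union> G"] exI[of _ e] conjI) simp_all
qed

lemma span_comb:
  assumes "finite K" "\<And>k. k \<in> K \<Longrightarrow> g k \<in> mat_span sc S"
  shows "(\<lambda>i j. \<Sum>k\<in>K. sc (c k) (g k i j)) \<in> mat_span sc S"
  using assms
proof (induction K rule: finite_induct)
  case empty
  then show ?case using span_zero by simp
next
  case (insert a K)
  have "(\<lambda>i j. \<Sum>k\<in>insert a K. sc (c k) (g k i j)) =
     mat_add (mat_scale sc (c a) (g a)) (\<lambda>i j. \<Sum>k\<in>K. sc (c k) (g k i j))"
    using insert by (simp add: mat_add_def mat_scale_def)
  then show ?case using insert span_add span_scale by simp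
qed

lemma conj_mult_neg: "conj_mult sc n m \<alpha> (mat_neg X) = mat_neg (conj_mult sc n m \<alpha> X)"
  unfolding conj_mult_def mat_neg_def by (intro ext) (simp add: sum_negf V.scale_minus_right)

lemma sc_if01: "sc (if b then 1 else 0) x = (if b then x else 0)"
  by simp

lemma delta_sum:
  fixes n p q :: nat and A :: "nat \<Rightarrow> nat \<Rightarrow> 'v"
  assumes "p < n" "q < n"
  shows "(\<Sum>i<n. \<Sum>j<n. sc (if i = p \<and> j = q then 1 else 0) (A i j)) = A p q"
proof -
  have "(\<Sum>i<n. \<Sum>j<n. sc (if i = p \<and> j = q then 1 else 0) (A i j))
      = (\<Sum>i<n. if i = p then A p q else 0)"
  proof (rule sum.cong)
    fix i assume "i \<in> {..<n}"
    show "(\<Sum>j<n. sc (if i = p \<and> j = q then 1 else 0) (A i j)) = (if i = p then A p q else 0)"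
    proof (cases "i = p")
      case True
      have "(\<Sum>j<n. sc (if i = p \<and> j = q then 1 else 0) (A i j)) = (\<Sum>j<n. if j = q then A p j else 0)"
        using True by (intro sum.cong) (simp_all add: sc_if01)
      also have "\<dots> = A p q" using assms by (subst sum.delta) auto
      finally show ?thesis using True by simp
    qed (simp add: sc_if01)
  qed simp
  also have "\<dots> = A p q" using assms by simp
  finally show ?thesis .
qed


lemma lin_swap:
  fixes n :: nat and A :: "nat \<Rightarrow> nat \<Rightarrow> 'v"
  shows  "(\<Sum>k\<in>K. sc (c k) (\<Sum>i<n. \<Sum>j<n. sc (w k i j) (A i j)))
   = (\<Sum>i<n. \<Sum>j<n. sc (\<Sum>k\<in>K. c k * w k i j) (A i j))"
proof -
  have "(\<Sum>k\<in>K. sc (c k) (\<Sum>i<n. \<Sum>j<n. sc (w k i j) (A i j)))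
      = (\<Sum>k\<in>K. \<Sum>i<n. \<Sum>j<n. sc (c k * w k i j) (A i j))"
    by (simp add: V.scale_sum_right)
  also have "\<dots> = (\<Sum>i<n. \<Sum>k\<in>K. \<Sum>j<n. sc (c k * w k i j) (A i j))"
    by (rule sum.swap)
  also have "\<dots> = (\<Sum>i<n. \<Sum>j<n. \<Sum>k\<in>K. sc (c k * w k i j) (A i j))"
    by (rule sum.cong[OF refl], rule sum.swap)
  also have "\<dots> = (\<Sum>i<n. \<Sum>j<n. sc (\<Sum>k\<in>K. c k * w k i j) (A i j))"
    by (simp add: V.scale_sum_left)
  finally show ?thesis .
qed

end


lemma sum_lessThan_1: "(\<Sum>i<Suc 0. f i) = f 0"
  by simp

context
  fixes sc :: "complex \<Rightarrow> 'v::ab_group_add \<Rightarrow> 'v" and C :: "nat \<Rightarrow> (nat \<Rightarrow> nat \<Rightarrow> 'v) set"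
  assumes vs: "vector_space sc"
    and herm: "\<And>n. n \<ge> 1 \<Longrightarrow> C n \<subseteq> Mn n"
    and cm: "\<And>n m \<alpha> X. n \<ge> 1 \<Longrightarrow> m \<ge> 1 \<Longrightarrow> X \<in> C n \<Longrightarrow> conj_mult sc n m \<alpha> X \<in> C m"
begin

interpretation V: vector_space sc by (rule vs)

lemma J1_comb:
  assumes "finite K" "\<And>k. k \<in> K \<Longrightarrow> v k \<in> J1 sc C"
  shows "(\<Sum>k\<in>K. sc (c k) (v k)) \<in> J1 sc C"
proof -
  have "\<forall>k\<in>K. \<exists>B. B \<in> Jn sc C 1 \<and> v k = B 0 0"
    using assms(2) unfolding J1_def by blast
  then obtain B where B: "\<And>k. k \<in> K \<Longrightarrow> B k \<in> Jn sc C 1 \<and> v k = B k 0 0"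
    by metis
  have "(\<lambda>i j. \<Sum>k\<in>K. sc (c k) (B k i j)) \<in> Jn sc C 1"
    unfolding Jn_def by (rule span_comb[OF vs assms(1)]) (use B in \<open>simp add: Jn_def\<close>)
  moreover have "(\<Sum>k\<in>K. sc (c k) (v k)) = (\<Sum>k\<in>K. sc (c k) (B k 0 0))"
    by (intro sum.cong refl) (simp add: B)
  ultimately show ?thesis unfolding J1_def
    by (intro image_eqI[where x = "(\<lambda>i j. \<Sum>k\<in>K. sc (c k) (B k i j))"]) simp_all
qed

lemma entry_J1:
  assumes n: "n \<ge> 1" and A: "A \<in> C n \<inter> mat_neg ` C n" and pq: "p < n" "q < n"
  shows "A p q \<in> J1 sc C"
proof -
  obtain K :: "nat set" and c \<alpha> where K: "finite K"
    and co0: "\<forall>i j. (\<Sum>k\<in>K. c k * (cnj (\<alpha> k i) * \<alpha> k j)) = (if i = p \<and> j = q then 1 else 0)"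
    using coeffs_exist[of p q] by (elim exE conjE) (rule that; assumption)
  note co = co0[rule_format]
  define \<gamma> where "\<gamma> k = conj_mult sc n 1 (\<lambda>i _. \<alpha> k i) A" for k
  obtain B where B: "B \<in> C n" "A = mat_neg B" using A by blast
  have g: "\<gamma> k \<in> Jn sc C 1" for k
  proof -
    have "\<gamma> k \<in> C 1" unfolding \<gamma>_def using cm[OF n _] A by simp
    moreover have "\<gamma> k = mat_neg (conj_mult sc n 1 (\<lambda>i _. \<alpha> k i) B)"
      unfolding \<gamma>_def B(2) by (rule conj_mult_neg[OF vs])
    moreover have "conj_mult sc n 1 (\<lambda>i _. \<alpha> k i) B \<in> C 1" using cm[OF n _ B(1)] by simp
    ultimately show ?thesis unfolding Jn_def by (intro span_base[OF vs]) blast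
  qed
  have g0: "\<gamma> k 0 0 = (\<Sum>i<n. \<Sum>j<n. sc (cnj (\<alpha> k i) * \<alpha> k j) (A i j))" for k
    unfolding \<gamma>_def conj_mult_def by simp
  have "(\<Sum>k\<in>K. sc (c k) (\<gamma> k 0 0)) \<in> J1 sc C"
    by (rule J1_comb[OF K]) (use g in \<open>auto simp: J1_def\<close>)
  also have "(\<Sum>k\<in>K. sc (c k) (\<gamma> k 0 0)) = A p q"
    unfolding g0 lin_swap[OF vs] co by (rule delta_sum[OF vs pq])
  finally show ?thesis .
qed

definition Emat :: "nat \<Rightarrow> nat \<Rightarrow> 'w::zero \<Rightarrow> nat \<Rightarrow> nat \<Rightarrow> 'w" where
  "Emat p q x = (\<lambda>i j. if i = p \<and> j = q then x else 0)"

lemma E_base: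
  assumes n: "n \<ge> 1" and a: "a \<in> C 1 \<inter> mat_neg ` C 1" and pq: "p < n" "q < n"
  shows "Emat p q (a 0 0) \<in> Jn sc C n"
proof -
  obtain K :: "nat set" and c \<alpha> where K: "finite K"
    and co0: "\<forall>i j. (\<Sum>k\<in>K. c k * (cnj (\<alpha> k i) * \<alpha> k j)) = (if i = p \<and> j = q then 1 else 0)"
    using coeffs_exist[of p q] by (elim exE conjE) (rule that; assumption)
  note co = co0[rule_format]
  define g where "g k = conj_mult sc 1 n (\<lambda>_ l. \<alpha> k l) a" for k
  obtain B where B: "B \<in> C 1" "a = mat_neg B" using a by blast
  have g: "g k \<in> Jn sc C n" for k
  proof -
    have "g k \<in> C n" unfolding g_def using cm[OF _ n] a by simp
    moreover have "g k = mat_neg (conj_mult sc 1 n (\<lambda>_ l. \<alpha> k l) B)"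
      unfolding g_def B(2) by (rule conj_mult_neg[OF vs])
    moreover have "conj_mult sc 1 n (\<lambda>_ l. \<alpha> k l) B \<in> C n" using cm[OF _ n B(1)] by simp
    ultimately show ?thesis unfolding Jn_def by (intro span_base[OF vs]) blast
  qed
  have gij: "g k i j = (if i < n \<and> j < n then sc (cnj (\<alpha> k i) * \<alpha> k j) (a 0 0) else 0)" for k i j
    unfolding g_def conj_mult_def by simp
  have "(\<lambda>i j. \<Sum>k\<in>K. sc (c k) (g k i j)) \<in> Jn sc C n"
    unfolding Jn_def by (rule span_comb[OF vs K]) (use g in \<open>simp add: Jn_def\<close>)
  also have "(\<lambda>i j. \<Sum>k\<in>K. sc (c k) (g k i j)) = Emat p q (a 0 0)"
  proof (intro ext)
    fix i j
    show "(\<Sum>k\<in>K. sc (c k) (g k i j)) = Emat p q (a 0 0) i j"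
    proof (cases "i < n \<and> j < n")
      case True
      have "(\<Sum>k\<in>K. sc (c k) (g k i j)) = (\<Sum>k\<in>K. sc (c k * (cnj (\<alpha> k i) * \<alpha> k j)) (a 0 0))"
        using True by (simp add: gij)
      also have "\<dots> = sc (\<Sum>k\<in>K. c k * (cnj (\<alpha> k i) * \<alpha> k j)) (a 0 0)"
        by (simp add: V.scale_sum_left)
      also have "\<dots> = Emat p q (a 0 0) i j"
        unfolding co Emat_def by simp
      finally show ?thesis .
    next
      case False
      then show ?thesis using pq by (auto simp: gij Emat_def)
    qed
  qed
  finally show ?thesis .
qed

lemma E_J1:
  assumes n: "n \<ge> 1" and v: "v \<in> J1 sc C" and pq: "p < n" "q < n"
  shows "Emat p q v \<in> Jn sc C n"
proof -
  obtain A where A: "A \<in> Jn sc C 1" "v = A 0 0" using v unfolding J1_def by blast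
  then obtain F c where F: "finite F" "F \<subseteq> C 1 \<inter> mat_neg ` C 1"
    "A = (\<lambda>i j. \<Sum>a\<in>F. sc (c a) (a i j))"
    unfolding Jn_def mat_span_def by blast
  have "(\<lambda>i j. \<Sum>a\<in>F. sc (c a) (Emat p q (a 0 0) i j)) \<in> Jn sc C n"
    unfolding Jn_def
  proof (rule span_comb[OF vs F(1)])
    fix a assume "a \<in> F"
    then have "a \<in> C 1 \<inter> mat_neg ` C 1" by (rule subsetD[OF F(2)])
    from E_base[OF n this pq] show "Emat p q (a 0 0) \<in> mat_span sc (C n \<inter> mat_neg ` C n)"
      unfolding Jn_def .
  qed
  also have "(\<lambda>i j. \<Sum>a\<in>F. sc (c a) (Emat p q (a 0 0) i j)) = Emat p q v"
    unfolding A(2) F(3) Emat_def by (intro ext) auto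
  finally show ?thesis .
qed

lemma span_Mn:
  assumes n: "n \<ge> 1" and X: "X \<in> Jn sc C n"
  shows "X \<in> Mn n"
proof -
  obtain F c where F: "finite F" "F \<subseteq> C n \<inter> mat_neg ` C n"
    "X = (\<lambda>i j. \<Sum>a\<in>F. sc (c a) (a i j))"
    using X unfolding Jn_def mat_span_def by blast
  have z: "a i j = 0" if "a \<in> F" "n \<le> i \<or> n \<le> j" for a i j
    using that F(2) herm[OF n] unfolding Mn_def by blast
  show ?thesis unfolding Mn_def F(3) by (auto intro!: sum.neutral simp: z)
qed

lemma main_eq:
  assumes n: "n \<ge> 1"
  shows "Mn_of n (J1 sc C) = Jn sc C n"
proof
  show "Jn sc C n \<subseteq> Mn_of n (J1 sc C)"
  proof
    fix X assume X: "X \<in> Jn sc C n"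
    obtain F c where F: "finite F" "F \<subseteq> C n \<inter> mat_neg ` C n"
      "X = (\<lambda>i j. \<Sum>a\<in>F. sc (c a) (a i j))"
      using X unfolding Jn_def mat_span_def by blast
    have "X p q \<in> J1 sc C" if "p < n" "q < n" for p q
      unfolding F(3)
    proof (rule J1_comb[OF F(1)])
      fix a assume "a \<in> F"
      then have "a \<in> C n \<inter> mat_neg ` C n" by (rule subsetD[OF F(2)])
      from entry_J1[OF n this that] show "a p q \<in> J1 sc C" .
    qed
    then show "X \<in> Mn_of n (J1 sc C)" unfolding Mn_of_def using span_Mn[OF n X] by blast
  qed
next
  show "Mn_of n (J1 sc C) \<subseteq> Jn sc C n"
  proof
    fix X assume X: "X \<in> Mn_of n (J1 sc C)"
    have "(\<lambda>i j. \<Sum>pq\<in>{..<n} \<times> {..<n}. sc 1 (Emat (fst pq) (snd pq) (X (fst pq) (snd pq)) i j)) \<in> Jn sc C n"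
      unfolding Jn_def by (rule span_comb[OF vs]) (use E_J1[OF n] X in \<open>auto simp: Jn_def Mn_of_def\<close>)
    also have "(\<lambda>i j. \<Sum>pq\<in>{..<n} \<times> {..<n}. sc 1 (Emat (fst pq) (snd pq) (X (fst pq) (snd pq)) i j)) = X"
    proof (intro ext)
      fix i j
      have "(\<Sum>pq\<in>{..<n} \<times> {..<n}. sc 1 (Emat (fst pq) (snd pq) (X (fst pq) (snd pq)) i j))
          = (\<Sum>pq\<in>{..<n} \<times> {..<n}. if pq = (i, j) then X i j else 0)"
        by (intro sum.cong) (auto simp: Emat_def)
      also have "\<dots> = X i j"
      proof (cases "i < n \<and> j < n")
        case True then show ?thesis by (subst sum.delta) auto
      next
        case False
        then have "X i j = 0" using X unfolding Mn_of_def Mn_def by auto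
        then show ?thesis by simp
      qed
      finally show "(\<Sum>pq\<in>{..<n} \<times> {..<n}. sc 1 (Emat (fst pq) (snd pq) (X (fst pq) (snd pq)) i j)) = X i j" .
    qed
    finally show "X \<in> Jn sc C n" .
  qed
qed

end

theorem lemma4p2:
  fixes sc :: "complex \<Rightarrow> 'v::ab_group_add \<Rightarrow> 'v" and st :: "'v \<Rightarrow> 'v"
    and C :: "nat \<Rightarrow> (nat \<Rightarrow> nat \<Rightarrow> 'v) set"
  assumes "star_vector_space sc st"
    and "matrix_ordering sc st C"
    and "n \<ge> 1"
  shows "Mn_of n (J1 sc C) = Jn sc C n"
proof (rule main_eq)
  show "vector_space sc" using assms(1) unfolding star_vector_space_def by (elim conjE)
  show "\<And>n. n \<ge> 1 \<Longrightarrow> C n \<subseteq> Mn n"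
  proof -
    fix n :: nat assume "n \<ge> 1"
    then have "C n \<subseteq> hermitian_mats st n" using assms(2) unfolding matrix_ordering_def by simp
    then show "C n \<subseteq> Mn n" unfolding hermitian_mats_def by auto
  qed
  show "\<And>n m \<alpha> X. n \<ge> 1 \<Longrightarrow> m \<ge> 1 \<Longrightarrow> X \<in> C n \<Longrightarrow> conj_mult sc n m \<alpha> X \<in> C m"
    using assms(2) unfolding matrix_ordering_def by simp
  show "n \<ge> 1" by (rule assms(3))
qed

end
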